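(* On $\mathbb C^2\otimes\mathbb C^2$, let $|\pm\rangle=(|0\rangle\pm|1\rangle)/\sqrt2$, let $\rho_1=\tfrac12(|00\rangle\langle00|+|{+}{+}\rangle\langle{+}{+}|)$, and let $\rho_3=|\psi\rangle\langle\psi|$ with $|\psi\rangle$ the normalization of $\alpha|1\rangle|-\rangle+\beta|-\rangle|1\rangle$, where $\alpha\beta\neq0$. Then $\rho_1$ and $\rho_3$ are orthogonal and $\{\rho_1,\rho_3\}$ is not perfectly distinguishable by LOCC.
   Context: "Perfectly distinguishable by LOCC": a finite-round protocol of local measurements by the two parties with broadcast of outcomes identifies the given state with probability 1. States are orthogonal if $\mathrm{tr}(\rho_1\rho_3)=0$. *)

theory Defs
  imports "Jordan_Normal_Form.Matrix"
begin

definition mtrace :: "complex mat \<Rightarrow> complex" where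
  "mtrace A = (\<Sum>i<dim_row A. A $$ (i, i))"

definition adj :: "complex mat \<Rightarrow> complex mat" where
  "adj A = mat (dim_col A) (dim_row A) (\<lambda>(i, j). cnj (A $$ (j, i)))"

text \<open>Kronecker (tensor) product of matrices and of vectors, standard basis ordering
  |00>, |01>, |10>, |11>.\<close>
definition kron :: "complex mat \<Rightarrow> complex mat \<Rightarrow> complex mat" where
  "kron A B = mat (dim_row A * dim_row B) (dim_col A * dim_col B)
     (\<lambda>(i, j). A $$ (i div dim_row B, j div dim_col B) * B $$ (i mod dim_row B, j mod dim_col B))"

definition kron_vec :: "complex vec \<Rightarrow> complex vec \<Rightarrow> complex vec" where
  "kron_vec v w = vec (dim_vec v * dim_vec w) (\<lambda>i. v $ (i div dim_vec w) * w $ (i mod dim_vec w))"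

definition proj :: "complex vec \<Rightarrow> complex mat" where
  "proj v = mat (dim_vec v) (dim_vec v) (\<lambda>(i, j). v $ i * cnj (v $ j))"

definition vnorm :: "complex vec \<Rightarrow> real" where
  "vnorm v = sqrt (\<Sum>i<dim_vec v. (cmod (v $ i))\<^sup>2)"

definition ket0 :: "complex vec" where "ket0 = vec_of_list [1, 0]"
definition ket1 :: "complex vec" where "ket1 = vec_of_list [0, 1]"
definition ketp :: "complex vec" where
  "ketp = vec_of_list [1 / complex_of_real (sqrt 2), 1 / complex_of_real (sqrt 2)]"
definition ketm :: "complex vec" where
  "ketm = vec_of_list [1 / complex_of_real (sqrt 2), - 1 / complex_of_real (sqrt 2)]"

definition rho1 :: "complex mat" where
  "rho1 = (1 / 2 :: complex) \<cdot>\<^sub>m (proj (kron_vec ket0 ket0) + proj (kron_vec ketp ketp))"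

definition psi_unnorm :: "complex \<Rightarrow> complex \<Rightarrow> complex vec" where
  "psi_unnorm \<alpha> \<beta> = \<alpha> \<cdot>\<^sub>v kron_vec ket1 ketm + \<beta> \<cdot>\<^sub>v kron_vec ketm ket1"

definition psi :: "complex \<Rightarrow> complex \<Rightarrow> complex vec" where
  "psi \<alpha> \<beta> = complex_of_real (1 / vnorm (psi_unnorm \<alpha> \<beta>)) \<cdot>\<^sub>v psi_unnorm \<alpha> \<beta>"

definition rho3 :: "complex \<Rightarrow> complex \<Rightarrow> complex mat" where
  "rho3 \<alpha> \<beta> = proj (psi \<alpha> \<beta>)"

text \<open>The predicate
  locc_from S M says: when the (unnormalised) branch of the protocol so far has
  accumulated Kraus operator M (a 4x4 matrix), the remaining finitely many rounds of
  local measurements by Alice (first factor) or Bob (second factor), with all outcomes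
  broadcast, can identify the state with certainty. At a leaf a guess sigma in S is
  made, and every other state tau must have probability tr(M tau M^dagger) = 0 of
  reaching this leaf. The inductive (least fixed point) definition enforces finitely
  many rounds.\<close>

definition is_local_measurement :: "complex mat list \<Rightarrow> bool" where
  "is_local_measurement Ks \<longleftrightarrow>
     (\<forall>K\<in>set Ks. K \<in> carrier_mat 2 2) \<and>
     (\<forall>i<2. \<forall>j<2. (\<Sum>K\<leftarrow>Ks. (adj K * K) $$ (i, j)) = (if i = j then 1 else 0))"

inductive locc_from :: "complex mat set \<Rightarrow> complex mat \<Rightarrow> bool" for S where
  leaf: "\<sigma> \<in> S \<Longrightarrow> (\<forall>\<tau>\<in>S. \<tau> \<noteq> \<sigma> \<longrightarrow> mtrace (M * \<tau> * adj M) = 0) \<Longrightarrow> locc_from S M"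
| alice: "is_local_measurement Ks \<Longrightarrow> (\<forall>K\<in>set Ks. locc_from S (kron K (1\<^sub>m 2) * M))
          \<Longrightarrow> locc_from S M"
| bob: "is_local_measurement Ks \<Longrightarrow> (\<forall>K\<in>set Ks. locc_from S (kron (1\<^sub>m 2) K * M))
          \<Longrightarrow> locc_from S M"

definition locc_perfectly_distinguishable :: "complex mat set \<Rightarrow> bool" where
  "locc_perfectly_distinguishable S \<longleftrightarrow> locc_from S (1\<^sub>m 4)"

end

theory Submission
  imports Defs
begin


definition ip :: "complex vec \<Rightarrow> complex vec \<Rightarrow> complex" where
  "ip x y = (\<Sum>i<dim_vec y. cnj (x $ i) * y $ i)"

lemma sum4: "(\<Sum>i<(4::nat). f i) = f 0 + f 1 + f 2 + f 3"
  by (simp add: eval_nat_numeral)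
lemma sum2: "(\<Sum>i<(2::nat). f i) = f 0 + f 1"
  by (simp add: eval_nat_numeral)

lemma ip_mult:
  assumes M: "M \<in> carrier_mat n m" and x: "dim_vec x = m" and y: "dim_vec y = m"
  shows "ip (M *\<^sub>v x) (M *\<^sub>v y) = ip x ((adj M * M) *\<^sub>v y)"
proof -
  have "ip (M *\<^sub>v x) (M *\<^sub>v y) = (\<Sum>i<n. cnj (\<Sum>j<m. M$$(i,j) * x$j) * (\<Sum>k<m. M$$(i,k) * y$k))"
    using M x y unfolding ip_def by (simp add: scalar_prod_def atLeast0LessThan)
  also have "\<dots> = (\<Sum>i<n. \<Sum>j<m. \<Sum>k<m. cnj (M$$(i,j)) * cnj (x$j) * (M$$(i,k) * y$k))"
    by (simp add: sum_product)
  also have "\<dots> = (\<Sum>j<m. \<Sum>i<n. \<Sum>k<m. cnj (M$$(i,j)) * cnj (x$j) * (M$$(i,k) * y$k))"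
    by (rule sum.swap)
  also have "\<dots> = (\<Sum>j<m. \<Sum>k<m. \<Sum>i<n. cnj (M$$(i,j)) * cnj (x$j) * (M$$(i,k) * y$k))"
    by (simp add: sum.swap[of _ "{..<n}"])
  also have "\<dots> = (\<Sum>j<m. cnj (x$j) * (\<Sum>k<m. (\<Sum>i<n. cnj (M$$(i,j)) * M$$(i,k)) * y$k))"
    by (simp add: sum_distrib_left sum_distrib_right mult_ac)
  also have "\<dots> = ip x ((adj M * M) *\<^sub>v y)"
    using M x y unfolding ip_def by (simp add: adj_def scalar_prod_def atLeast0LessThan)
  finally show ?thesis .
qed

lemma less4: "(i::nat) < 4 \<longleftrightarrow> i = 0 \<or> i = 1 \<or> i = 2 \<or> i = 3" by auto
lemma less2: "(i::nat) < 2 \<longleftrightarrow> i = 0 \<or> i = 1" by auto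

lemma kron_carrier: "A \<in> carrier_mat 2 2 \<Longrightarrow> B \<in> carrier_mat 2 2 \<Longrightarrow> kron A B \<in> carrier_mat 4 4"
  by (simp add: kron_def)

lemma adj_carrier: "A \<in> carrier_mat n m \<Longrightarrow> adj A \<in> carrier_mat m n"
  by (simp add: adj_def)

lemma kron_mult:
  assumes "A \<in> carrier_mat 2 2" "B \<in> carrier_mat 2 2" "C \<in> carrier_mat 2 2" "D \<in> carrier_mat 2 2"
  shows "kron A B * kron C D = kron (A * C) (B * D)"
proof (rule eq_matI)
  fix i j assume "i < dim_row (kron (A * C) (B * D))" "j < dim_col (kron (A * C) (B * D))"
  hence "i < 4" "j < 4" using assms by (auto simp: kron_def)
  thus "(kron A B * kron C D) $$ (i, j) = kron (A * C) (B * D) $$ (i, j)"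
    using assms unfolding less4
    by (auto simp: kron_def scalar_prod_def atLeast0LessThan sum4 sum2 algebra_simps)
qed (use assms in \<open>auto simp: kron_def\<close>)

lemma adj_kron_sq:
  assumes "A \<in> carrier_mat 2 2" "B \<in> carrier_mat 2 2"
  shows "adj (kron A B) * kron A B = kron (adj A * A) (adj B * B)"
proof (rule eq_matI)
  fix i j assume "i < dim_row (kron (adj A * A) (adj B * B))" "j < dim_col (kron (adj A * A) (adj B * B))"
  hence "i < 4" "j < 4" using assms by (auto simp: kron_def adj_def)
  thus "(adj (kron A B) * kron A B) $$ (i, j) = kron (adj A * A) (adj B * B) $$ (i, j)"
    using assms unfolding less4
    by (auto simp: kron_def adj_def scalar_prod_def atLeast0LessThan sum4 sum2 algebra_simps)
qed (use assms in \<open>auto simp: kron_def adj_def\<close>)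

lemma adj_mult_sq:
  assumes "K \<in> carrier_mat 2 2" "A \<in> carrier_mat 2 2"
  shows "adj (K * A) * (K * A) = adj A * (adj K * K) * A"
proof (rule eq_matI)
  fix i j assume "i < dim_row (adj A * (adj K * K) * A)" "j < dim_col (adj A * (adj K * K) * A)"
  hence "i < 2" "j < 2" using assms by (auto simp: adj_def)
  thus "(adj (K * A) * (K * A)) $$ (i, j) = (adj A * (adj K * K) * A) $$ (i, j)"
    using assms unfolding less2
    by (auto simp: adj_def scalar_prod_def atLeast0LessThan sum2 algebra_simps)
qed (use assms in \<open>auto simp: adj_def\<close>)

definition r2 :: complex where "r2 = 1 / complex_of_real (sqrt 2)"
lemma r2_sq: "r2 * r2 = 1/2"
  unfolding r2_def by (simp flip: of_real_mult)
lemma cnj_r2[simp]: "cnj r2 = r2" unfolding r2_def by simp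
lemma r2_nz[simp]: "r2 \<noteq> 0" unfolding r2_def by simp

lemma sq2c: "complex_of_real (sqrt 2) * complex_of_real (sqrt 2) = 2"
  by (simp flip: of_real_mult)
lemma ket_dims[simp]: "dim_vec ket0 = 2" "dim_vec ket1 = 2" "dim_vec ketp = 2" "dim_vec ketm = 2"
  by (simp_all add: ket0_def ket1_def ketp_def ketm_def)
lemma ket_idx[simp]: "ket0 $ 0 = 1" "ket0 $ 1 = 0" "ket1 $ 0 = 0" "ket1 $ 1 = 1"
  "ketp $ 0 = r2" "ketp $ 1 = r2" "ketm $ 0 = r2" "ketm $ 1 = - r2"
  "ket0 $ Suc 0 = 0" "ket1 $ Suc 0 = 1" "ketp $ Suc 0 = r2" "ketm $ Suc 0 = - r2"
  by (simp_all add: ket0_def ket1_def ketp_def ketm_def r2_def)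

definition u0 where "u0 = kron_vec ket0 ket0"
definition up where "up = kron_vec ketp ketp"
definition w where "w \<alpha> \<beta> = psi_unnorm \<alpha> \<beta>"

lemma dim_u0[simp]: "dim_vec u0 = 4" by (simp add: u0_def kron_vec_def)
lemma dim_up[simp]: "dim_vec up = 4" by (simp add: up_def kron_vec_def)
lemma dim_w[simp]: "dim_vec (w a b) = 4" by (simp add: w_def psi_unnorm_def kron_vec_def)

lemma u0_idx[simp]: "u0 $ 0 = 1" "u0 $ 1 = 0" "u0 $ 2 = 0" "u0 $ 3 = 0" "u0 $ Suc 0 = 0"
  by (simp_all add: u0_def kron_vec_def)
lemma up_idx[simp]: "up $ 0 = 1/2" "up $ 1 = 1/2" "up $ 2 = 1/2" "up $ 3 = 1/2" "up $ Suc 0 = 1/2"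
  by (simp_all add: up_def kron_vec_def r2_sq)
lemma w_idx[simp]: "w a b $ 0 = 0" "w a b $ 1 = b * r2" "w a b $ 2 = a * r2" "w a b $ 3 = - a * r2 - b * r2" "w a b $ Suc 0 = b * r2"
  by (simp_all add: w_def psi_unnorm_def kron_vec_def)

lemma trace_mid:
  assumes M: "M \<in> carrier_mat n m" and X: "X \<in> carrier_mat m m"
  shows "mtrace (M * X * adj M) = (\<Sum>i<n. \<Sum>k<m. \<Sum>j<m. M$$(i,j) * X$$(j,k) * cnj (M$$(i,k)))"
  using M X unfolding mtrace_def
  by (simp add: adj_def scalar_prod_def atLeast0LessThan sum_distrib_right)

lemma proj_carrier: "dim_vec v = m \<Longrightarrow> proj v \<in> carrier_mat m m" by (simp add: proj_def)

lemma tr_proj: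
  assumes M: "M \<in> carrier_mat n m" and v: "dim_vec v = m"
  shows "mtrace (M * proj v * adj M) = ip (M *\<^sub>v v) (M *\<^sub>v v)"
proof -
  have "mtrace (M * proj v * adj M) = (\<Sum>i<n. \<Sum>k<m. \<Sum>j<m. M$$(i,j) * (v$j * cnj (v$k)) * cnj (M$$(i,k)))"
    using trace_mid[OF M proj_carrier[OF v]] v by (simp add: proj_def)
  also have "\<dots> = ip (M *\<^sub>v v) (M *\<^sub>v v)"
    using M v unfolding ip_def by (simp add: scalar_prod_def atLeast0LessThan sum_product sum_distrib_left sum_distrib_right mult_ac)
  finally show ?thesis .
qed

lemma ip_self: "ip x x = complex_of_real (\<Sum>i<dim_vec x. (cmod (x$i))\<^sup>2)"
  unfolding ip_def of_real_sum
  by (rule sum.cong, rule refl, metis complex_norm_square mult.commute)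

lemma ip_self_zero: assumes "ip x x = 0" "i < dim_vec x" shows "x $ i = 0"
proof -
  have "(\<Sum>i<dim_vec x. (cmod (x$i))\<^sup>2) = 0" using assms(1) unfolding ip_self by (simp only: of_real_eq_0_iff)
  hence "\<forall>i\<in>{..<dim_vec x}. (cmod (x$i))\<^sup>2 = 0" by (subst (asm) sum_nonneg_eq_0_iff) auto
  thus ?thesis using assms(2) by auto
qed

lemma ip_self_nonneg: "Re (ip x x) \<ge> 0" "Im (ip x x) = 0"
  unfolding ip_self by (auto intro: sum_nonneg)

lemma rho1_carrier: "rho1 \<in> carrier_mat 4 4"
  by (simp add: rho1_def proj_def kron_vec_def)

lemma rho1_idx: "j < 4 \<Longrightarrow> k < 4 \<Longrightarrow> rho1 $$ (j,k) = 1/2 * (u0$j * cnj (u0$k) + up$j * cnj (up$k))"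
  by (simp add: rho1_def proj_def u0_def up_def kron_vec_def)

lemma tr_rho1:
  assumes M: "M \<in> carrier_mat n 4"
  shows "mtrace (M * rho1 * adj M) = 1/2 * (ip (M *\<^sub>v u0) (M *\<^sub>v u0) + ip (M *\<^sub>v up) (M *\<^sub>v up))"
proof -
  have "mtrace (M * rho1 * adj M) = (\<Sum>i<n. \<Sum>k<4. \<Sum>j<4. M$$(i,j) * (1/2 * (u0$j * cnj (u0$k) + up$j * cnj (up$k))) * cnj (M$$(i,k)))"
    by (simp add: trace_mid[OF M rho1_carrier] rho1_idx)
  also have "\<dots> = 1/2 * ((\<Sum>i<n. \<Sum>k<4. \<Sum>j<4. M$$(i,j) * (u0$j * cnj (u0$k)) * cnj (M$$(i,k)))
     + (\<Sum>i<n. \<Sum>k<4. \<Sum>j<4. M$$(i,j) * (up$j * cnj (up$k)) * cnj (M$$(i,k))))"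
    by (simp add: sum_distrib_left sum.distrib algebra_simps)
  also have "\<dots> = 1/2 * (mtrace (M * proj u0 * adj M) + mtrace (M * proj up * adj M))"
    unfolding trace_mid[OF M proj_carrier[OF dim_u0]] trace_mid[OF M proj_carrier[OF dim_up]] by (simp add: proj_def)
  finally show ?thesis using M by (simp add: tr_proj)
qed

definition cpsi :: "complex \<Rightarrow> complex \<Rightarrow> complex" where
  "cpsi a b = complex_of_real (1 / vnorm (w a b))"

lemma dim_psi[simp]: "dim_vec (psi a b) = 4" by (simp add: psi_def flip: w_def)
lemma psi_eq: "psi a b = cpsi a b \<cdot>\<^sub>v w a b" by (simp add: psi_def cpsi_def w_def)

lemma orth: "mtrace (rho1 * rho3 a b) = 0"
proof -
  have "mtrace (rho1 * rho3 a b) = (\<Sum>i<4. \<Sum>j<4. rho1$$(i,j) * (psi a b $ j * cnj (psi a b $ i)))"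
    using rho1_carrier unfolding mtrace_def rho3_def
    by (simp add: proj_def scalar_prod_def atLeast0LessThan)
  also have "\<dots> = 0"
    unfolding sum4 by (simp add: rho1_idx psi_eq algebra_simps)
  finally show ?thesis .
qed

lemma C1: assumes "F \<in> carrier_mat 2 2"
  shows "ip u0 (kron F (y \<cdot>\<^sub>m 1\<^sub>m 2) *\<^sub>v w a b) = y * F$$(0,1) * a * r2"
  using assms by (simp add: ip_def kron_def sum4 scalar_prod_def atLeast0LessThan algebra_simps)

lemma C2: assumes "F \<in> carrier_mat 2 2"
  shows "ip up (kron F (y \<cdot>\<^sub>m 1\<^sub>m 2) *\<^sub>v w a b) = y * b * r2 / 2 * (F$$(0,0) + F$$(1,0) - F$$(0,1) - F$$(1,1))"
  using assms by (simp add: ip_def kron_def sum4 scalar_prod_def atLeast0LessThan algebra_simps)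

lemma C3: assumes "F \<in> carrier_mat 2 2"
  shows "ip u0 (kron (x \<cdot>\<^sub>m 1\<^sub>m 2) F *\<^sub>v w a b) = x * F$$(0,1) * b * r2"
  using assms by (simp add: ip_def kron_def sum4 scalar_prod_def atLeast0LessThan algebra_simps)

lemma C4: assumes "F \<in> carrier_mat 2 2"
  shows "ip up (kron (x \<cdot>\<^sub>m 1\<^sub>m 2) F *\<^sub>v w a b) = x * a * r2 / 2 * (F$$(0,0) + F$$(1,0) - F$$(0,1) - F$$(1,1))"
  using assms by (simp add: ip_def kron_def sum4 scalar_prod_def atLeast0LessThan algebra_simps)

lemma herm: assumes "X \<in> carrier_mat 2 2" shows "(adj X * X) $$ (1,0) = cnj ((adj X * X) $$ (0,1))"
  using assms by (simp add: adj_def scalar_prod_def atLeast0LessThan sum2 mult.commute)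

lemma scal_mat: fixes F :: "complex mat" assumes "F \<in> carrier_mat 2 2" "F$$(0,1) = 0" "F$$(1,0) = 0" "F$$(1,1) = F$$(0,0)"
  shows "F = F$$(0,0) \<cdot>\<^sub>m 1\<^sub>m 2"
  by (rule eq_matI) (use assms in \<open>auto simp: less2\<close>)

lemma sum_list_sum_swap: "(\<Sum>K\<leftarrow>Ks. \<Sum>i\<in>I. f K i) = (\<Sum>i\<in>I. \<Sum>K\<leftarrow>Ks. f K i)"
  by (induction Ks) (auto simp: sum.distrib)

lemma step_O:
  assumes G: "\<forall>K\<in>set Ks. G K \<in> carrier_mat 4 4"
    and S: "\<forall>i<4. \<forall>j<4. (\<Sum>K\<leftarrow>Ks. G K $$ (i,j)) = (if i = j then 1 else 0)"
    and p: "dim_vec p = 4" and q: "dim_vec q = 4"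
  shows "(\<Sum>K\<leftarrow>Ks. ip p (G K *\<^sub>v q)) = ip p q"
proof -
  have "(\<Sum>K\<leftarrow>Ks. ip p (G K *\<^sub>v q)) = (\<Sum>K\<leftarrow>Ks. \<Sum>i<4. \<Sum>j<4. cnj (p$i) * q$j * G K $$ (i,j))"
    apply (rule arg_cong[where f = sum_list], rule map_cong[OF refl])
    subgoal for K using G q by (auto simp: ip_def scalar_prod_def atLeast0LessThan sum_distrib_left mult_ac)
    done
  also have "\<dots> = (\<Sum>i<4. \<Sum>j<4. cnj (p$i) * q$j * (\<Sum>K\<leftarrow>Ks. G K $$ (i,j)))"
    by (simp add: sum_list_sum_swap sum_list_const_mult)
  also have "\<dots> = (\<Sum>i<4. \<Sum>j<4. cnj (p$i) * q$j * (if i = j then 1 else 0))"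
    using S by (intro sum.cong refl) auto
  also have "\<dots> = ip p q" using q by (simp add: ip_def if_distrib cong: if_cong)
  finally show ?thesis .
qed




definition Oc :: "complex \<Rightarrow> complex \<Rightarrow> complex mat \<Rightarrow> bool" where
  "Oc a b M \<longleftrightarrow> ip (M *\<^sub>v u0) (M *\<^sub>v w a b) = 0 \<and> ip (M *\<^sub>v up) (M *\<^sub>v w a b) = 0"

definition Pc :: "complex mat \<Rightarrow> bool" where
  "Pc M \<longleftrightarrow> (\<exists>A B x y. A \<in> carrier_mat 2 2 \<and> B \<in> carrier_mat 2 2 \<and> M = kron A B \<and>
      adj A * A = x \<cdot>\<^sub>m 1\<^sub>m 2 \<and> adj B * B = y \<cdot>\<^sub>m 1\<^sub>m 2 \<and> x \<noteq> 0 \<and> y \<noteq> 0)"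

lemma adj_one: "adj (1\<^sub>m 2) * 1\<^sub>m 2 = 1\<^sub>m 2"
  by (rule eq_matI) (auto simp: adj_def less2 scalar_prod_def atLeast0LessThan sum2)

lemma sum_list_zero: "\<forall>K\<in>set Ks. f K = 0 \<Longrightarrow> (\<Sum>K\<leftarrow>Ks. f K) = (0::complex)"
  by (induction Ks) auto

lemma adjm_carrier: "X \<in> carrier_mat n n \<Longrightarrow> adj X * X \<in> carrier_mat n n"
  unfolding carrier_mat_def adj_def by auto

lemma gen_O:
  assumes N: "\<forall>K\<in>set Ks. N K \<in> carrier_mat 4 4" and M: "M \<in> carrier_mat 4 4"
    and H: "\<forall>K\<in>set Ks. Oc a b (N K * M)"
    and S: "\<forall>i<4. \<forall>j<4. (\<Sum>K\<leftarrow>Ks. (adj (N K) * N K) $$ (i,j)) = (if i = j then 1 else 0)"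
  shows "Oc a b M"
proof -
  have key: "ip ((N K * M) *\<^sub>v p) ((N K * M) *\<^sub>v q) = ip (M *\<^sub>v p) ((adj (N K) * N K) *\<^sub>v (M *\<^sub>v q))"
    if K: "K \<in> set Ks" and p: "dim_vec p = 4" and q: "dim_vec q = 4" for K p q
  proof -
    have NK: "N K \<in> carrier_mat 4 4" using N K by auto
    have pc: "p \<in> carrier_vec 4" and qc: "q \<in> carrier_vec 4" using p q unfolding carrier_vec_def by auto
    have "(N K * M) *\<^sub>v p = N K *\<^sub>v (M *\<^sub>v p)" by (rule assoc_mult_mat_vec[OF NK M pc])
    moreover have "(N K * M) *\<^sub>v q = N K *\<^sub>v (M *\<^sub>v q)" by (rule assoc_mult_mat_vec[OF NK M qc])
    moreover have "dim_vec (M *\<^sub>v p) = 4" "dim_vec (M *\<^sub>v q) = 4" using M by auto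
    moreover have "ip (N K *\<^sub>v (M *\<^sub>v p)) (N K *\<^sub>v (M *\<^sub>v q)) = ip (M *\<^sub>v p) ((adj (N K) * N K) *\<^sub>v (M *\<^sub>v q))"
      by (rule ip_mult[OF NK]) fact+
    ultimately show ?thesis by metis
  qed
  have G: "\<forall>K\<in>set Ks. adj (N K) * N K \<in> carrier_mat 4 4" using N by (auto intro: adjm_carrier)
  have "ip (M *\<^sub>v u0) (M *\<^sub>v w a b) = (\<Sum>K\<leftarrow>Ks. ip (M *\<^sub>v u0) ((adj (N K) * N K) *\<^sub>v (M *\<^sub>v w a b)))"
    by (rule step_O[OF G S, symmetric]) (use M in auto)
  also have "\<dots> = (\<Sum>K\<leftarrow>Ks. ip ((N K * M) *\<^sub>v u0) ((N K * M) *\<^sub>v w a b))"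
    using key by (intro arg_cong[where f = sum_list] map_cong refl) simp
  also have "\<dots> = 0" using H by (intro sum_list_zero) (simp add: Oc_def)
  finally have 1: "ip (M *\<^sub>v u0) (M *\<^sub>v w a b) = 0" .
  have "ip (M *\<^sub>v up) (M *\<^sub>v w a b) = (\<Sum>K\<leftarrow>Ks. ip (M *\<^sub>v up) ((adj (N K) * N K) *\<^sub>v (M *\<^sub>v w a b)))"
    by (rule step_O[OF G S, symmetric]) (use M in auto)
  also have "\<dots> = (\<Sum>K\<leftarrow>Ks. ip ((N K * M) *\<^sub>v up) ((N K * M) *\<^sub>v w a b))"
    using key by (intro arg_cong[where f = sum_list] map_cong refl) simp
  also have "\<dots> = 0" using H by (intro sum_list_zero) (simp add: Oc_def)
  finally show ?thesis using 1 by (simp add: Oc_def)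
qed

lemma div_mod_eq': "((i::nat) div 2 = j div 2 \<and> i mod 2 = j mod 2) \<longleftrightarrow> i = j"
  by (metis div_mult_mod_eq)

lemma kron_entry: "X \<in> carrier_mat 2 2 \<Longrightarrow> Y \<in> carrier_mat 2 2 \<Longrightarrow> i < 4 \<Longrightarrow> j < 4 \<Longrightarrow>
  kron X Y $$ (i,j) = X $$ (i div 2, j div 2) * Y $$ (i mod 2, j mod 2)"
  by (simp add: kron_def)

lemma adj_mult_carrier: "X \<in> carrier_mat 2 2 \<Longrightarrow> adj X * X \<in> carrier_mat 2 2"
  by (rule adjm_carrier)

lemma meas_carrier: "is_local_measurement Ks \<Longrightarrow> K \<in> set Ks \<Longrightarrow> K \<in> carrier_mat 2 2"
  by (simp add: is_local_measurement_def)

lemma alice_S: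
  assumes m: "is_local_measurement Ks"
  shows "\<forall>i<4. \<forall>j<4. (\<Sum>K\<leftarrow>Ks. (adj (kron K (1\<^sub>m 2)) * kron K (1\<^sub>m 2)) $$ (i,j)) = (if i = j then 1 else 0)"
proof (intro allI impI)
  fix i j :: nat assume i: "i < 4" and j: "j < 4"
  have "(\<Sum>K\<leftarrow>Ks. (adj (kron K (1\<^sub>m 2)) * kron K (1\<^sub>m 2)) $$ (i,j))
      = (\<Sum>K\<leftarrow>Ks. (adj K * K) $$ (i div 2, j div 2) * (1\<^sub>m 2 :: complex mat) $$ (i mod 2, j mod 2))"
    apply (intro arg_cong[where f = sum_list] map_cong refl)
    subgoal for K using meas_carrier[OF m, of K] i j
      by (simp add: adj_kron_sq adj_one kron_entry adj_mult_carrier)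
    done
  also have "\<dots> = (\<Sum>K\<leftarrow>Ks. (adj K * K) $$ (i div 2, j div 2)) * (1\<^sub>m 2 :: complex mat) $$ (i mod 2, j mod 2)"
    by (simp add: sum_list_mult_const)
  also have "\<dots> = (if i div 2 = j div 2 then 1 else 0) * (if i mod 2 = j mod 2 then 1 else 0)"
  proof -
    have "i div 2 < 2" "j div 2 < 2" using i j by auto
    hence "(\<Sum>K\<leftarrow>Ks. (adj K * K) $$ (i div 2, j div 2)) = (if i div 2 = j div 2 then 1 else 0)"
      using m unfolding is_local_measurement_def by blast
    thus ?thesis by simp
  qed
  also have "\<dots> = (if i = j then 1 else 0)" using div_mod_eq' by auto
  finally show "(\<Sum>K\<leftarrow>Ks. (adj (kron K (1\<^sub>m 2)) * kron K (1\<^sub>m 2)) $$ (i,j)) = (if i = j then 1 else 0)" .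
qed

lemma bob_S:
  assumes m: "is_local_measurement Ks"
  shows "\<forall>i<4. \<forall>j<4. (\<Sum>K\<leftarrow>Ks. (adj (kron (1\<^sub>m 2) K) * kron (1\<^sub>m 2) K) $$ (i,j)) = (if i = j then 1 else 0)"
proof (intro allI impI)
  fix i j :: nat assume i: "i < 4" and j: "j < 4"
  have "(\<Sum>K\<leftarrow>Ks. (adj (kron (1\<^sub>m 2) K) * kron (1\<^sub>m 2) K) $$ (i,j))
      = (\<Sum>K\<leftarrow>Ks. (1\<^sub>m 2 :: complex mat) $$ (i div 2, j div 2) * (adj K * K) $$ (i mod 2, j mod 2))"
    apply (intro arg_cong[where f = sum_list] map_cong refl)
    subgoal for K using meas_carrier[OF m, of K] i j
      by (simp add: adj_kron_sq adj_one kron_entry adj_mult_carrier)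
    done
  also have "\<dots> = (1\<^sub>m 2 :: complex mat) $$ (i div 2, j div 2) * (\<Sum>K\<leftarrow>Ks. (adj K * K) $$ (i mod 2, j mod 2))"
    by (simp add: sum_list_const_mult)
  also have "\<dots> = (if i div 2 = j div 2 then 1 else 0) * (if i mod 2 = j mod 2 then 1 else 0)"
  proof -
    have "i mod 2 < 2" "j mod 2 < 2" by auto
    hence "(\<Sum>K\<leftarrow>Ks. (adj K * K) $$ (i mod 2, j mod 2)) = (if i mod 2 = j mod 2 then 1 else 0)"
      using m unfolding is_local_measurement_def by blast
    moreover have "i div 2 < 2" "j div 2 < 2" using i j by auto
    ultimately show ?thesis by simp
  qed
  also have "\<dots> = (if i = j then 1 else 0)" using div_mod_eq' by auto
  finally show "(\<Sum>K\<leftarrow>Ks. (adj (kron (1\<^sub>m 2) K) * kron (1\<^sub>m 2) K) $$ (i,j)) = (if i = j then 1 else 0)" .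
qed

lemma L7:
  assumes m: "is_local_measurement Ks" and A: "A \<in> carrier_mat 2 2"
  shows "(\<Sum>K\<leftarrow>Ks. (adj (K * A) * (K * A)) $$ (0,0)) = (adj A * A) $$ (0,0)"
proof -
  have "(\<Sum>K\<leftarrow>Ks. (adj (K * A) * (K * A)) $$ (0,0))
     = (\<Sum>K\<leftarrow>Ks. \<Sum>p<2. \<Sum>q<2. cnj (A$$(p,0)) * A$$(q,0) * (adj K * K) $$ (p,q))"
    apply (intro arg_cong[where f = sum_list] map_cong refl)
    subgoal for K using meas_carrier[OF m, of K] A
      by (simp add: adj_mult_sq adj_def scalar_prod_def atLeast0LessThan sum2 algebra_simps)
    done
  also have "\<dots> = (\<Sum>p<2. \<Sum>q<2. cnj (A$$(p,0)) * A$$(q,0) * (\<Sum>K\<leftarrow>Ks. (adj K * K) $$ (p,q)))"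
    by (simp add: sum_list_sum_swap sum_list_const_mult)
  also have "\<dots> = (adj A * A) $$ (0,0)"
    using m A unfolding is_local_measurement_def
    by (simp add: sum2 adj_def scalar_prod_def atLeast0LessThan)
  finally show ?thesis .
qed




lemma ip_zero_left: "\<forall>i<dim_vec y. x$i = 0 \<Longrightarrow> ip x y = 0" by (simp add: ip_def)
lemma ip_zero_right: "\<forall>i<dim_vec y. y$i = 0 \<Longrightarrow> ip x y = 0" by (simp add: ip_def)

lemma ip_self_eq0: assumes "1/2 * (p + q) = (0::complex)" "Re p \<ge> 0" "Re q \<ge> 0" "Im p = 0" "Im q = 0"
  shows "p = 0"
proof -
  have "Re p + Re q = 0" using assms(1) by (metis add_divide_distrib complex_Re_numeral div_0 minus_add_cancel mult_2 plus_complex.simps(1) times_divide_eq_right zero_complex.sel(1) divide_self_if mult_zero_right one_neq_zero nonzero_mult_div_cancel_left zero_neq_numeral Re_divide_numeral)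
  hence "Re p = 0" using assms by linarith
  thus ?thesis using assms by (simp add: complex_eq_iff)
qed

lemma leaf1:
  assumes M: "M \<in> carrier_mat 4 4" and T: "mtrace (M * rho1 * adj M) = 0"
  shows "Oc a b M"
proof -
  let ?p = "ip (M *\<^sub>v u0) (M *\<^sub>v u0)" and ?q = "ip (M *\<^sub>v up) (M *\<^sub>v up)"
  have e: "1/2 * (?p + ?q) = 0" using T tr_rho1[OF M] by simp
  have "?p = 0" by (rule ip_self_eq0[OF e]) (simp_all add: ip_self_nonneg)
  moreover have "?q = 0" by (rule ip_self_eq0[of ?q ?p]) (use e in \<open>simp_all add: ip_self_nonneg add.commute\<close>)
  ultimately have "\<forall>i<4. (M *\<^sub>v u0) $ i = 0" "\<forall>i<4. (M *\<^sub>v up) $ i = 0"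
    using ip_self_zero M by auto
  thus ?thesis unfolding Oc_def using M by (auto intro!: ip_zero_left)
qed

lemma vnorm_ip: "vnorm v = sqrt (Re (ip v v))"
  unfolding vnorm_def ip_self by simp

lemma cpsi_nz: assumes "a \<noteq> 0" shows "cpsi a b \<noteq> 0"
proof
  assume "cpsi a b = 0"
  hence "vnorm (w a b) = 0" by (simp add: cpsi_def)
  hence "Re (ip (w a b) (w a b)) = 0" unfolding vnorm_ip by simp
  hence "ip (w a b) (w a b) = 0" using ip_self_nonneg(2) by (simp add: complex_eq_iff)
  hence "w a b $ 2 = 0" by (rule ip_self_zero) simp
  thus False using assms by simp
qed

lemma Mpsi: assumes M: "M \<in> carrier_mat 4 4" shows "M *\<^sub>v psi a b = cpsi a b \<cdot>\<^sub>v (M *\<^sub>v w a b)"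
proof -
  have wc: "w a b \<in> carrier_vec 4" unfolding carrier_vec_def by simp
  show ?thesis unfolding psi_eq by (rule mult_mat_vec[OF M wc])
qed

lemma leaf3:
  assumes a: "a \<noteq> 0" and M: "M \<in> carrier_mat 4 4" and T: "mtrace (M * rho3 a b * adj M) = 0"
  shows "Oc a b M"
proof -
  have "ip (M *\<^sub>v psi a b) (M *\<^sub>v psi a b) = 0" using T tr_proj[OF M dim_psi] unfolding rho3_def by simp
  hence "\<forall>i<4. (M *\<^sub>v psi a b) $ i = 0" using ip_self_zero M by auto
  hence "\<forall>i<4. (M *\<^sub>v w a b) $ i = 0" using cpsi_nz[OF a] M unfolding Mpsi[OF M] by auto
  thus ?thesis unfolding Oc_def using M by (auto intro!: ip_zero_right)
qed

lemma kron_scal: "kron (x \<cdot>\<^sub>m 1\<^sub>m 2) (y \<cdot>\<^sub>m 1\<^sub>m 2) = (x * y) \<cdot>\<^sub>m (1\<^sub>m 4 :: complex mat)"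
  by (rule eq_matI) (auto simp: kron_def less4)

lemma P_adj: assumes "Pc M" shows "\<exists>c. c \<noteq> 0 \<and> M \<in> carrier_mat 4 4 \<and> adj M * M = c \<cdot>\<^sub>m 1\<^sub>m 4"
proof -
  obtain A B x y where A: "A \<in> carrier_mat 2 2" and B: "B \<in> carrier_mat 2 2" and MAB: "M = kron A B"
    and xA: "adj A * A = x \<cdot>\<^sub>m 1\<^sub>m 2" and yB: "adj B * B = y \<cdot>\<^sub>m 1\<^sub>m 2" and x: "x \<noteq> 0" and y: "y \<noteq> 0"
    using assms unfolding Pc_def by blast
  have "adj M * M = (x*y) \<cdot>\<^sub>m 1\<^sub>m 4" unfolding MAB adj_kron_sq[OF A B] xA yB kron_scal ..
  moreover have "M \<in> carrier_mat 4 4" unfolding MAB by (rule kron_carrier[OF A B])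
  ultimately show ?thesis using x y by (intro exI[of _ "x*y"]) auto
qed

lemma ip_scal1: "dim_vec v = 4 \<Longrightarrow> ip v ((c \<cdot>\<^sub>m 1\<^sub>m 4) *\<^sub>v v) = c * ip v v"
  by (simp add: ip_def sum4 scalar_prod_def atLeast0LessThan algebra_simps)

lemma ip_P: assumes "Pc M" "dim_vec v = 4" shows "\<exists>c. c \<noteq> 0 \<and> ip (M *\<^sub>v v) (M *\<^sub>v v) = c * ip v v"
proof -
  obtain c where c: "c \<noteq> 0" and M: "M \<in> carrier_mat 4 4" and E: "adj M * M = c \<cdot>\<^sub>m 1\<^sub>m 4"
    using P_adj[OF assms(1)] by blast
  have "ip (M *\<^sub>v v) (M *\<^sub>v v) = ip v ((c \<cdot>\<^sub>m 1\<^sub>m 4) *\<^sub>v v)"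
    unfolding E[symmetric] by (rule ip_mult[OF M]) (use assms in auto)
  thus ?thesis using c ip_scal1 assms(2) by auto
qed

lemma leafP1: assumes "Pc M" shows "mtrace (M * rho1 * adj M) \<noteq> 0"
proof -
  obtain c where c: "c \<noteq> 0" and M: "M \<in> carrier_mat 4 4" and E: "adj M * M = c \<cdot>\<^sub>m 1\<^sub>m 4"
    using P_adj[OF assms(1)] by blast
  have 1: "ip (M *\<^sub>v u0) (M *\<^sub>v u0) = c"
    unfolding ip_mult[OF M dim_u0 dim_u0] E ip_scal1[OF dim_u0] by (simp add: ip_def sum4)
  have 2: "ip (M *\<^sub>v up) (M *\<^sub>v up) = c"
    unfolding ip_mult[OF M dim_up dim_up] E ip_scal1[OF dim_up] by (simp add: ip_def sum4)
  show ?thesis unfolding tr_rho1[OF M] 1 2 using c by simp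
qed

lemma leafP3: assumes "Pc M" "a \<noteq> 0" shows "mtrace (M * rho3 a b * adj M) \<noteq> 0"
proof -
  obtain c where c: "c \<noteq> 0" and M: "M \<in> carrier_mat 4 4" and E: "adj M * M = c \<cdot>\<^sub>m 1\<^sub>m 4"
    using P_adj[OF assms(1)] by blast
  have "ip (psi a b) (psi a b) \<noteq> 0"
  proof
    assume "ip (psi a b) (psi a b) = 0"
    hence "psi a b $ 2 = 0" by (rule ip_self_zero) simp
    thus False using cpsi_nz[OF assms(2)] assms(2) by (simp add: psi_eq)
  qed
  moreover have "mtrace (M * rho3 a b * adj M) = c * ip (psi a b) (psi a b)"
    unfolding rho3_def tr_proj[OF M dim_psi] ip_mult[OF M dim_psi dim_psi] E ip_scal1[OF dim_psi] ..
  ultimately show ?thesis using c by simp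
qed

lemma rho_neq: "rho1 \<noteq> rho3 a b"
proof
  assume "rho1 = rho3 a b"
  hence "rho1 $$ (0,0) = rho3 a b $$ (0,0)" by simp
  thus False by (simp add: rho1_idx rho3_def proj_def psi_eq)
qed



lemma F_scalar:
  fixes F :: "complex mat"
  assumes F: "F \<in> carrier_mat 2 2" and h: "F$$(1,0) = cnj (F$$(0,1))"
    and c: "c \<noteq> 0" and d: "d \<noteq> 0" and e1: "c * F$$(0,1) = 0"
    and e2: "d * (F$$(0,0) + F$$(1,0) - F$$(0,1) - F$$(1,1)) = 0"
  shows "F = F$$(0,0) \<cdot>\<^sub>m 1\<^sub>m 2"
proof -
  have 1: "F$$(0,1) = 0" using e1 c by simp
  have 2: "F$$(1,0) = 0" using h 1 by simp
  have 3: "F$$(1,1) = F$$(0,0)" using e2 d 1 2 by simp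
  show ?thesis by (rule scal_mat[OF F 1 2 3])
qed

lemma alice_P:
  assumes ab: "a * b \<noteq> 0" and m: "is_local_measurement Ks" and P: "Pc M"
    and H: "\<forall>K\<in>set Ks. Oc a b (kron K (1\<^sub>m 2) * M) \<and> \<not> Pc (kron K (1\<^sub>m 2) * M)"
  shows False
proof -
  obtain A B x y where A: "A \<in> carrier_mat 2 2" and B: "B \<in> carrier_mat 2 2" and MAB: "M = kron A B"
    and xA: "adj A * A = x \<cdot>\<^sub>m 1\<^sub>m 2" and yB: "adj B * B = y \<cdot>\<^sub>m 1\<^sub>m 2" and x: "x \<noteq> 0" and y: "y \<noteq> 0"
    using P unfolding Pc_def by blast
  have a: "a \<noteq> 0" and b: "b \<noteq> 0" using ab by auto
  have zero: "(adj (K * A) * (K * A)) $$ (0,0) = 0" if K: "K \<in> set Ks" for K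
  proof (rule ccontr)
    assume nz: "(adj (K * A) * (K * A)) $$ (0,0) \<noteq> 0"
    have Kc: "K \<in> carrier_mat 2 2" by (rule meas_carrier[OF m K])
    have KA: "K * A \<in> carrier_mat 2 2" using Kc A by (rule mult_carrier_mat)
    define F where "F = adj (K * A) * (K * A)"
    have Fc: "F \<in> carrier_mat 2 2" unfolding F_def by (rule adjm_carrier[OF KA])
    have N: "kron K (1\<^sub>m 2) * M = kron (K * A) B"
      unfolding MAB kron_mult[OF Kc one_carrier_mat A B] using B by simp
    have Nc: "kron (K * A) B \<in> carrier_mat 4 4" by (rule kron_carrier[OF KA B])
    have G: "adj (kron (K * A) B) * kron (K * A) B = kron F (y \<cdot>\<^sub>m 1\<^sub>m 2)"
      unfolding adj_kron_sq[OF KA B] F_def yB ..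
    have O: "Oc a b (kron (K * A) B)" using H K N by metis
    have o1: "ip u0 (kron F (y \<cdot>\<^sub>m 1\<^sub>m 2) *\<^sub>v w a b) = 0"
      using O unfolding Oc_def ip_mult[OF Nc dim_u0 dim_w] G by simp
    have o2: "ip up (kron F (y \<cdot>\<^sub>m 1\<^sub>m 2) *\<^sub>v w a b) = 0"
      using O unfolding Oc_def ip_mult[OF Nc dim_up dim_w] G by simp
    have "F = F$$(0,0) \<cdot>\<^sub>m 1\<^sub>m 2"
    proof (rule F_scalar[OF Fc _ _ _ _ ])
      show "F $$ (1, 0) = cnj (F $$ (0, 1))" unfolding F_def by (rule herm[OF KA])
      show "y * a * r2 \<noteq> 0" using y a by simp
      show "y * a * r2 * F $$ (0, 1) = 0" using o1 unfolding C1[OF Fc] by (simp add: mult_ac)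
      show "y * b * r2 / 2 \<noteq> 0" using y b by simp
      show "y * b * r2 / 2 * (F $$ (0, 0) + F $$ (1, 0) - F $$ (0, 1) - F $$ (1, 1)) = 0"
        using o2 unfolding C2[OF Fc] .
    qed
    hence "Pc (kron (K * A) B)" unfolding Pc_def using KA B yB y nz F_def by blast
    thus False using H K N by metis
  qed
  have "(\<Sum>K\<leftarrow>Ks. (adj (K * A) * (K * A)) $$ (0,0)) = 0" using zero by (intro sum_list_zero) auto
  hence "(adj A * A) $$ (0,0) = 0" unfolding L7[OF m A] .
  thus False using xA x by simp
qed

lemma bob_P:
  assumes ab: "a * b \<noteq> 0" and m: "is_local_measurement Ks" and P: "Pc M"
    and H: "\<forall>K\<in>set Ks. Oc a b (kron (1\<^sub>m 2) K * M) \<and> \<not> Pc (kron (1\<^sub>m 2) K * M)"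
  shows False
proof -
  obtain A B x y where A: "A \<in> carrier_mat 2 2" and B: "B \<in> carrier_mat 2 2" and MAB: "M = kron A B"
    and xA: "adj A * A = x \<cdot>\<^sub>m 1\<^sub>m 2" and yB: "adj B * B = y \<cdot>\<^sub>m 1\<^sub>m 2" and x: "x \<noteq> 0" and y: "y \<noteq> 0"
    using P unfolding Pc_def by blast
  have a: "a \<noteq> 0" and b: "b \<noteq> 0" using ab by auto
  have zero: "(adj (K * B) * (K * B)) $$ (0,0) = 0" if K: "K \<in> set Ks" for K
  proof (rule ccontr)
    assume nz: "(adj (K * B) * (K * B)) $$ (0,0) \<noteq> 0"
    have Kc: "K \<in> carrier_mat 2 2" by (rule meas_carrier[OF m K])
    have KB: "K * B \<in> carrier_mat 2 2" using Kc B by (rule mult_carrier_mat)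
    define F where "F = adj (K * B) * (K * B)"
    have Fc: "F \<in> carrier_mat 2 2" unfolding F_def by (rule adjm_carrier[OF KB])
    have N: "kron (1\<^sub>m 2) K * M = kron A (K * B)"
      unfolding MAB kron_mult[OF one_carrier_mat Kc A B] using A by simp
    have Nc: "kron A (K * B) \<in> carrier_mat 4 4" by (rule kron_carrier[OF A KB])
    have G: "adj (kron A (K * B)) * kron A (K * B) = kron (x \<cdot>\<^sub>m 1\<^sub>m 2) F"
      unfolding adj_kron_sq[OF A KB] F_def xA ..
    have O: "Oc a b (kron A (K * B))" using H K N by metis
    have o1: "ip u0 (kron (x \<cdot>\<^sub>m 1\<^sub>m 2) F *\<^sub>v w a b) = 0"
      using O unfolding Oc_def ip_mult[OF Nc dim_u0 dim_w] G by simp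
    have o2: "ip up (kron (x \<cdot>\<^sub>m 1\<^sub>m 2) F *\<^sub>v w a b) = 0"
      using O unfolding Oc_def ip_mult[OF Nc dim_up dim_w] G by simp
    have "F = F$$(0,0) \<cdot>\<^sub>m 1\<^sub>m 2"
    proof (rule F_scalar[OF Fc _ _ _ _ ])
      show "F $$ (1, 0) = cnj (F $$ (0, 1))" unfolding F_def by (rule herm[OF KB])
      show "x * b * r2 \<noteq> 0" using x b by simp
      show "x * b * r2 * F $$ (0, 1) = 0" using o1 unfolding C3[OF Fc] by (simp add: mult_ac)
      show "x * a * r2 / 2 \<noteq> 0" using x a by simp
      show "x * a * r2 / 2 * (F $$ (0, 0) + F $$ (1, 0) - F $$ (0, 1) - F $$ (1, 1)) = 0"
        using o2 unfolding C4[OF Fc] .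
    qed
    hence "Pc (kron A (K * B))" unfolding Pc_def using KB A xA x nz F_def by blast
    thus False using H K N by metis
  qed
  have "(\<Sum>K\<leftarrow>Ks. (adj (K * B) * (K * B)) $$ (0,0)) = 0" using zero by (intro sum_list_zero) auto
  hence "(adj B * B) $$ (0,0) = 0" unfolding L7[OF m B] .
  thus False using yB y by simp
qed



lemma main_ind:
  assumes ab: "a * b \<noteq> 0"
  shows "locc_from {rho1, rho3 a b} M \<Longrightarrow> M \<in> carrier_mat 4 4 \<Longrightarrow> Oc a b M \<and> \<not> Pc M"
proof (induction rule: locc_from.induct)
  case (leaf \<sigma> M)
  have a: "a \<noteq> 0" using ab by auto
  show ?case
  proof (cases "\<sigma> = rho1")
    case True
    hence "mtrace (M * rho3 a b * adj M) = 0" using leaf.hyps(2) rho_neq[of a b] by auto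
    thus ?thesis using leaf3[OF a leaf.prems] leafP3[OF _ a] by blast
  next
    case False
    hence "\<sigma> = rho3 a b" using leaf.hyps(1) by auto
    hence "mtrace (M * rho1 * adj M) = 0" using leaf.hyps(2) rho_neq[of a b] by auto
    thus ?thesis using leaf1[OF leaf.prems] leafP1 by blast
  qed
next
  case (alice Ks M)
  have Nc: "\<forall>K\<in>set Ks. kron K (1\<^sub>m 2) \<in> carrier_mat 4 4"
  proof
    fix K assume "K \<in> set Ks"
    hence Kc: "K \<in> carrier_mat 2 2" by (rule meas_carrier[OF alice.hyps(1)])
    show "kron K (1\<^sub>m 2) \<in> carrier_mat 4 4" by (rule kron_carrier[OF Kc one_carrier_mat])
  qed
  have NK: "\<forall>K\<in>set Ks. kron K (1\<^sub>m 2) * M \<in> carrier_mat 4 4"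
  proof
    fix K assume "K \<in> set Ks"
    hence "kron K (1\<^sub>m 2) \<in> carrier_mat 4 4" using Nc by blast
    thus "kron K (1\<^sub>m 2) * M \<in> carrier_mat 4 4" using alice.prems by (rule mult_carrier_mat)
  qed
  have H: "\<forall>K\<in>set Ks. Oc a b (kron K (1\<^sub>m 2) * M) \<and> \<not> Pc (kron K (1\<^sub>m 2) * M)"
    using alice.IH NK by blast
  have "Oc a b M" using gen_O[OF Nc alice.prems _ alice_S[OF alice.hyps(1)]] H by blast
  moreover have "\<not> Pc M" using alice_P[OF ab alice.hyps(1) _ H] by blast
  ultimately show ?case ..
next
  case (bob Ks M)
  have Nc: "\<forall>K\<in>set Ks. kron (1\<^sub>m 2) K \<in> carrier_mat 4 4"
  proof
    fix K assume "K \<in> set Ks"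
    hence Kc: "K \<in> carrier_mat 2 2" by (rule meas_carrier[OF bob.hyps(1)])
    show "kron (1\<^sub>m 2) K \<in> carrier_mat 4 4" by (rule kron_carrier[OF one_carrier_mat Kc])
  qed
  have NK: "\<forall>K\<in>set Ks. kron (1\<^sub>m 2) K * M \<in> carrier_mat 4 4"
  proof
    fix K assume "K \<in> set Ks"
    hence "kron (1\<^sub>m 2) K \<in> carrier_mat 4 4" using Nc by blast
    thus "kron (1\<^sub>m 2) K * M \<in> carrier_mat 4 4" using bob.prems by (rule mult_carrier_mat)
  qed
  have H: "\<forall>K\<in>set Ks. Oc a b (kron (1\<^sub>m 2) K * M) \<and> \<not> Pc (kron (1\<^sub>m 2) K * M)"
    using bob.IH NK by blast
  have "Oc a b M" using gen_O[OF Nc bob.prems _ bob_S[OF bob.hyps(1)]] H by blast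
  moreover have "\<not> Pc M" using bob_P[OF ab bob.hyps(1) _ H] by blast
  ultimately show ?case ..
qed

lemma one4: "(1\<^sub>m 4 :: complex mat) = kron (1\<^sub>m 2) (1\<^sub>m 2)"
  by (rule eq_matI) (auto simp: kron_def less4)

lemma one_smult2: "(1::complex) \<cdot>\<^sub>m 1\<^sub>m 2 = 1\<^sub>m 2"
  by (rule eq_matI) auto

lemma P_one: "Pc (1\<^sub>m 4)"
  unfolding Pc_def one4
  by (intro exI[of _ "1\<^sub>m 2"] exI[of _ "1::complex"]) (simp add: adj_one one_smult2)

theorem mainTheorem8:
  fixes \<alpha> \<beta> :: complex
  assumes "\<alpha> * \<beta> \<noteq> 0"
  shows "mtrace (rho1 * rho3 \<alpha> \<beta>) = 0 \<and> \<not> locc_perfectly_distinguishable {rho1, rho3 \<alpha> \<beta>}"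
proof
  show "mtrace (rho1 * rho3 \<alpha> \<beta>) = 0" by (rule orth)
  show "\<not> locc_perfectly_distinguishable {rho1, rho3 \<alpha> \<beta>}"
  proof
    assume "locc_perfectly_distinguishable {rho1, rho3 \<alpha> \<beta>}"
    hence "locc_from {rho1, rho3 \<alpha> \<beta>} (1\<^sub>m 4)" unfolding locc_perfectly_distinguishable_def .
    hence "Oc \<alpha> \<beta> (1\<^sub>m 4) \<and> \<not> Pc (1\<^sub>m 4)" by (rule main_ind[OF assms _ one_carrier_mat])
    hence "\<not> Pc (1\<^sub>m 4)" ..
    thus False using P_one by simp
  qed
qed

end
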